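(* Let $R$ be the ring of integers of a nonarchimedean local field of characteristic not $2$ in which $2$ is a prime element. (a) For any unit $\epsilon\in R$, $\mathbb{H}\perp\langle\epsilon\rangle$ is isometric to $\langle 1,-1,\epsilon\rangle$. Hence $\mathbb{H}\perp\langle\epsilon\rangle$ primitively represents all binary $R$-lattices of the form $\langle\alpha,\epsilon\rangle$ with $\alpha\in R$; in particular, $\mathbb{H}\perp\langle\epsilon\rangle$ is primitively $1$-universal. (b) If an $R$-lattice $J$ primitively represents an $R$-lattice $K$ of rank $k$ and also primitively represents some unit of $R$, then for every $n\ge1$, $\mathbb{H}^n\perp J$ primitively represents all $R$-lattices of rank $n+k$ of the form $\ell\perp K$, where $\ell$ is any $R$-lattice of rank $n$. In particular, $\mathbb{H}^n\perp J$ is primitively $n$-universal.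
   Context: An $R$-lattice is a finitely generated $R$-submodule of a quadratic space $(V,B)$ over $F$ with $Q(v)=B(v,v)$, assumed integral ($B(L,L)\subseteq R$). $L$ primitively represents $\beta\in R$ if $\beta=Q(v)$ for some $v\in L$ with $Rv$ a direct summand. A representation is an $R$-linear map preserving $B$, primitive if its image is a direct summand; a lattice is primitively $n$-universal if it primitively represents every nondegenerate integral $R$-lattice of rank $n$. $\mathbb{H}$ is the binary lattice with Gram matrix $\begin{pmatrix}0&1\\1&0\end{pmatrix}$, $\mathbb{H}^n$ the orthogonal sum of $n$ copies, and $\langle a_1,\dots,a_k\rangle$ the lattice with Gram matrix $\operatorname{diag}(a_1,\dots,a_k)$. *)

theory Defs
  imports "Jordan_Normal_Form.Determinant" "HOL-Computational_Algebra.Factorial_Ring"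
begin

text \<open>The ring R (a type 'a) is the ring of integers of a nonarchimedean local field,
  i.e. a complete discrete valuation ring with finite residue field.\<close>
definition nonarch_local_int_ring :: "'a::idom itself \<Rightarrow> bool" where
  "nonarch_local_int_ring _ \<longleftrightarrow>
     (\<exists>\<pi>::'a. \<pi> \<noteq> 0 \<and> \<not> \<pi> dvd 1
        \<and> (\<forall>x. x \<noteq> 0 \<longrightarrow> (\<exists>u n. u dvd 1 \<and> x = u * \<pi> ^ n))
        \<and> (\<exists>S. finite S \<and> (\<forall>x. \<exists>s\<in>S. \<pi> dvd (x - s)))
        \<and> (\<forall>a::nat \<Rightarrow> 'a. (\<forall>n. \<pi> ^ n dvd (a (Suc n) - a n))
              \<longrightarrow> (\<exists>L. \<forall>n. \<pi> ^ n dvd (L - a n))))"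

text \<open>Lattices over the PID R are free; a lattice of rank n is given by its (symmetric,
  R-valued, hence integral) Gram matrix with respect to a basis.\<close>
definition is_lattice :: "nat \<Rightarrow> 'a::comm_ring_1 mat \<Rightarrow> bool" where
  "is_lattice n G \<longleftrightarrow> G \<in> carrier_mat n n \<and> transpose_mat G = G"

definition nondegenerate :: "'a::comm_ring_1 mat \<Rightarrow> bool" where
  "nondegenerate G \<longleftrightarrow> det G \<noteq> 0"

definition orth_sum :: "'a::comm_ring_1 mat \<Rightarrow> 'a mat \<Rightarrow> 'a mat" (infixr \<open>\<perp>\<^sub>L\<close> 65) where
  "A \<perp>\<^sub>L B = four_block_mat A (0\<^sub>m (dim_row A) (dim_col B)) (0\<^sub>m (dim_row B) (dim_col A)) B"

definition hyp_plane :: "'a::comm_ring_1 mat" where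
  "hyp_plane = mat 2 2 (\<lambda>(i, j). if i = j then 0 else 1)"

fun hyp_pow :: "nat \<Rightarrow> 'a::comm_ring_1 mat" where
  "hyp_pow 0 = 0\<^sub>m 0 0"
| "hyp_pow (Suc n) = hyp_plane \<perp>\<^sub>L hyp_pow n"

definition diag_lat :: "'a::comm_ring_1 list \<Rightarrow> 'a mat" where
  "diag_lat as = mat (length as) (length as) (\<lambda>(i, j). if i = j then as ! i else 0)"

definition is_submodule :: "nat \<Rightarrow> 'a::comm_ring_1 vec set \<Rightarrow> bool" where
  "is_submodule m C \<longleftrightarrow> C \<subseteq> carrier_vec m \<and> 0\<^sub>v m \<in> C
     \<and> (\<forall>x\<in>C. \<forall>y\<in>C. x + y \<in> C) \<and> (\<forall>r. \<forall>x\<in>C. r \<cdot>\<^sub>v x \<in> C)"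

definition direct_summand :: "nat \<Rightarrow> 'a::comm_ring_1 vec set \<Rightarrow> bool" where
  "direct_summand m M \<longleftrightarrow> (\<exists>C. is_submodule m C \<and> M \<inter> C = {0\<^sub>v m}
      \<and> (\<forall>w\<in>carrier_vec m. \<exists>a\<in>M. \<exists>c\<in>C. w = a + c))"

definition prim_rep :: "'a::comm_ring_1 mat \<Rightarrow> 'a mat \<Rightarrow> bool" where
  "prim_rep L K \<longleftrightarrow> (\<exists>X. X \<in> carrier_mat (dim_row L) (dim_row K)
      \<and> transpose_mat X * L * X = K
      \<and> direct_summand (dim_row L) ((\<lambda>u. X *\<^sub>v u) ` carrier_vec (dim_row K)))"

definition prim_rep_elem :: "'a::comm_ring_1 mat \<Rightarrow> 'a \<Rightarrow> bool" where
  "prim_rep_elem L \<beta> \<longleftrightarrow> (\<exists>v\<in>carrier_vec (dim_row L). v \<bullet> (L *\<^sub>v v) = \<beta>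
      \<and> direct_summand (dim_row L) {r \<cdot>\<^sub>v v | r. True})"

definition prim_universal :: "nat \<Rightarrow> 'a::comm_ring_1 mat \<Rightarrow> bool" where
  "prim_universal n L \<longleftrightarrow> (\<forall>K. is_lattice n K \<and> nondegenerate K \<longrightarrow> prim_rep L K)"

definition isometric :: "'a::comm_ring_1 mat \<Rightarrow> 'a mat \<Rightarrow> bool" where
  "isometric A B \<longleftrightarrow> (\<exists>X Y. X \<in> carrier_mat (dim_row A) (dim_row B)
      \<and> Y \<in> carrier_mat (dim_row B) (dim_row A)
      \<and> X * Y = 1\<^sub>m (dim_row A) \<and> Y * X = 1\<^sub>m (dim_row B)
      \<and> transpose_mat X * A * X = B)"

end

theory Submission
  imports Defs
begin


lemma hyp_plane_carrier: "hyp_plane \<in> carrier_mat 2 2"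
  unfolding hyp_plane_def by simp

lemma l1: "\<not> i < 2 \<Longrightarrow> (i - 2) div 2 = (i::nat) div 2 - 1"
proof -
  assume "\<not> i < 2" then obtain m where "i = m + 2" by (metis add.commute le_Suc_ex not_less numeral_2_eq_2 )
  thus ?thesis by simp
qed
lemma div2_aux:
  "\<not> i < 2 \<Longrightarrow> \<not> j < 2 \<Longrightarrow> (i - 2) div 2 = (j - 2) div 2 \<longleftrightarrow> i div 2 = (j::nat) div 2"
  "i < 2 \<Longrightarrow> \<not> j < (2::nat) \<Longrightarrow> i div 2 \<noteq> j div 2"
  "\<not> i < 2 \<Longrightarrow> j < (2::nat) \<Longrightarrow> i div 2 \<noteq> j div 2"
  "\<not> i < 2 \<Longrightarrow> \<not> j < 2 \<Longrightarrow> i - 2 = j - 2 \<longleftrightarrow> i = (j::nat)"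
  subgoal proof -
    assume "\<not> i < 2" "\<not> j < 2"
    then obtain m p where "i = m + 2" "j = p + 2" by (metis add.commute le_Suc_ex not_less numeral_2_eq_2)
    thus ?thesis by simp
  qed
  subgoal by auto
  subgoal by auto
  subgoal by auto
  done

lemma hyp_pow_explicit:
  "hyp_pow n = mat (2*n) (2*n) (\<lambda>(i,j). if i div 2 = j div 2 \<and> i \<noteq> j then 1 else 0)"
proof (induction n)
  case 0
  show ?case by (rule eq_matI, auto)
next
  case (Suc n)
  have eq: "(hyp_pow (Suc n) :: 'a::comm_ring_1 mat) = four_block_mat hyp_plane (0\<^sub>m 2 (2*n)) (0\<^sub>m (2*n) 2)
     (mat (2*n) (2*n) (\<lambda>(i,j). if i div 2 = j div 2 \<and> i \<noteq> j then 1 else 0))"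
    by (simp only: hyp_pow.simps orth_sum_def Suc.IH, simp add: hyp_plane_def)
  show ?case unfolding eq
    by (rule eq_matI) (auto simp: hyp_plane_def div2_aux)
qed

lemma hyp_pow_carrier: "hyp_pow n \<in> carrier_mat (2*n) (2*n)"
  by (simp add: hyp_pow_explicit)

lemma sum_even_odd: "(\<Sum>p\<in>{0..<2*(n::nat)}. f p) = (\<Sum>i<n. f (2*i) + f (2*i+1))"
proof (induction n)
  case 0 then show ?case by simp
next
  case (Suc n)
  have "{0..<2*Suc n} = insert (2*n+1) (insert (2*n) {0..<2*n})" by auto
  thus ?case using Suc by (simp add: algebra_simps)
qed

lemma hyp_pow_mult_vec:
  assumes h: "h \<in> carrier_vec (2*n)" and p: "p < 2*n"
  shows "(hyp_pow n *\<^sub>v h) $ p = h $ (if even p then p + 1 else p - 1)"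
proof -
  let ?q = "if even p then p + 1 else p - 1"
  have q: "?q < 2*n" using p by presburger
  have "(hyp_pow n *\<^sub>v h) $ p = (\<Sum>q\<in>{0..<2*n}. (if p div 2 = q div 2 \<and> p \<noteq> q then 1 else 0) * h $ q)"
    using h p by (simp add: hyp_pow_explicit scalar_prod_def)
  also have "\<dots> = (\<Sum>q\<in>{0..<2*n}. if q = ?q then h $ q else 0)"
  proof (rule sum.cong)
    fix q assume "q \<in> {0..<2*n}"
    have "(p div 2 = q div 2 \<and> p \<noteq> q) \<longleftrightarrow> q = ?q" by presburger
    thus "(if p div 2 = q div 2 \<and> p \<noteq> q then 1 else 0) * h $ q = (if q = ?q then h $ q else 0)" by auto
  qed simp
  also have "\<dots> = h $ ?q" using q by (simp add: sum.delta')
  finally show ?thesis .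
qed

lemma hform:
  assumes h: "h \<in> carrier_vec (2*n)" and h': "h' \<in> carrier_vec (2*n)"
  shows "h \<bullet> (hyp_pow n *\<^sub>v h') = (\<Sum>i<n. h $ (2*i) * h' $ (2*i+1) + h $ (2*i+1) * h' $ (2*i))"
proof -
  have "h \<bullet> (hyp_pow n *\<^sub>v h') = (\<Sum>p\<in>{0..<2*n}. h $ p * (hyp_pow n *\<^sub>v h') $ p)"
  proof -
    have dim: "dim_vec (hyp_pow n *\<^sub>v h') = 2*n" using carrier_matD(1)[OF hyp_pow_carrier[of n]] by simp
    show ?thesis unfolding scalar_prod_def dim ..
  qed
  also have "\<dots> = (\<Sum>p\<in>{0..<2*n}. h $ p * h' $ (if even p then p + 1 else p - 1))"
    by (rule sum.cong, simp, simp add: hyp_pow_mult_vec[OF h'])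
  also have "\<dots> = (\<Sum>i<n. h $ (2*i) * h' $ (2*i+1) + h $ (2*i+1) * h' $ (2*i))"
    by (subst sum_even_odd, simp)
  finally show ?thesis .
qed

lemma gram_entry:
  assumes "Y \<in> carrier_mat m a" "M \<in> carrier_mat m m" "Z \<in> carrier_mat m b" "i < a" "j < b"
  shows "(transpose_mat Y * M * Z) $$ (i,j) = col Y i \<bullet> (M *\<^sub>v col Z j)"
  using assms by (simp add: assoc_mult_mat[of "transpose_mat Y" a m M m Z b] mult_mat_vec_def)

lemma bil_sym:
  fixes J :: "'a::comm_ring_1 mat"
  assumes J: "J \<in> carrier_mat m m" "transpose_mat J = J" and x: "x \<in> carrier_vec m" and y: "y \<in> carrier_vec m"
  shows "x \<bullet> (J *\<^sub>v y) = y \<bullet> (J *\<^sub>v x)"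
proof -
  have Jij: "J $$ (i,j) = J $$ (j,i)" if "i < m" "j < m" for i j
    using J that by (metis carrier_matD index_transpose_mat(1))
  have "x \<bullet> (J *\<^sub>v y) = (\<Sum>i\<in>{0..<m}. x $ i * (\<Sum>j\<in>{0..<m}. J $$ (i,j) * y $ j))"
    using J x y by (simp add: scalar_prod_def row_def)
  also have "\<dots> = (\<Sum>i\<in>{0..<m}. \<Sum>j\<in>{0..<m}. x $ i * J $$ (i,j) * y $ j)"
    by (simp add: sum_distrib_left mult.assoc)
  also have "\<dots> = (\<Sum>j\<in>{0..<m}. \<Sum>i\<in>{0..<m}. x $ i * J $$ (i,j) * y $ j)"
    by (rule sum.swap)
  also have "\<dots> = (\<Sum>j\<in>{0..<m}. y $ j * (\<Sum>i\<in>{0..<m}. J $$ (j,i) * x $ i))"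
  proof -
    have pw: "x $ i * J $$ (i,j) * y $ j = y $ j * (J $$ (j,i) * x $ i)" if "i < m" "j < m" for i j
      using Jij[OF that] by (simp add: ac_simps)
    show ?thesis unfolding sum_distrib_left
      by (rule sum.cong[OF refl], rule sum.cong[OF refl], simp add: pw)
  qed
  also have "\<dots> = y \<bullet> (J *\<^sub>v x)"
    using J x y by (simp add: scalar_prod_def row_def)
  finally show ?thesis .
qed

lemma bil_smult_right:
  fixes J :: "'a::comm_ring_1 mat"
  assumes J: "J \<in> carrier_mat m m" and x: "x \<in> carrier_vec m" and y: "y \<in> carrier_vec m"
  shows "x \<bullet> (J *\<^sub>v (c \<cdot>\<^sub>v y)) = c * (x \<bullet> (J *\<^sub>v y))"
proof -
  have "J *\<^sub>v (c \<cdot>\<^sub>v y) = c \<cdot>\<^sub>v (J *\<^sub>v y)"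
    by (rule eq_vecI, insert J y, auto simp: row_def scalar_prod_def sum_distrib_left ac_simps intro!: sum.cong)
  thus ?thesis using J x y by simp
qed




lemma vec_mat_swap:
  fixes N :: "'a::comm_ring_1 mat"
  assumes N: "N \<in> carrier_mat m k" and v: "v \<in> carrier_vec m" and b: "b \<in> carrier_vec k"
  shows "v \<bullet> (N *\<^sub>v b) = (\<Sum>c\<in>{0..<k}. (v \<bullet> col N c) * b $ c)"
proof -
  have "v \<bullet> (N *\<^sub>v b) = (\<Sum>p\<in>{0..<m}. v $ p * (\<Sum>c\<in>{0..<k}. N $$ (p,c) * b $ c))"
    using N v b by (simp add: scalar_prod_def row_def)
  also have "\<dots> = (\<Sum>p\<in>{0..<m}. \<Sum>c\<in>{0..<k}. v $ p * N $$ (p,c) * b $ c)"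
    by (simp add: sum_distrib_left mult.assoc)
  also have "\<dots> = (\<Sum>c\<in>{0..<k}. \<Sum>p\<in>{0..<m}. v $ p * N $$ (p,c) * b $ c)"
    by (rule sum.swap)
  also have "\<dots> = (\<Sum>c\<in>{0..<k}. (v \<bullet> col N c) * b $ c)"
    using N v by (simp add: scalar_prod_def sum_distrib_right col_def)
  finally show ?thesis .
qed

lemma append_vec_smult: "r \<cdot>\<^sub>v (h @\<^sub>v w) = (r \<cdot>\<^sub>v h) @\<^sub>v (r \<cdot>\<^sub>v w)"
  by (rule eq_vecI, auto)

lemma append_vec_zero: "0\<^sub>v (a + b) = 0\<^sub>v a @\<^sub>v 0\<^sub>v b"
  by (rule eq_vecI, auto)

lemma main_rep:
  fixes J :: "'a::comm_ring_1 mat"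
  assumes J: "J \<in> carrier_mat j j" "transpose_mat J = J"
    and X: "X \<in> carrier_mat j k" "transpose_mat X * J * X = K"
    and ds: "direct_summand j ((\<lambda>u. X *\<^sub>v u) ` carrier_vec k)"
    and v: "v \<in> carrier_vec j" "v \<bullet> (J *\<^sub>v v) = u"
    and sq: "\<forall>\<beta>. \<exists>r. 2 dvd r * r * u - \<beta>"
    and l: "l \<in> carrier_mat n n" "transpose_mat l = l"
  shows "prim_rep (hyp_pow n \<perp>\<^sub>L J) (l \<perp>\<^sub>L K)"
proof -
  have K: "K \<in> carrier_mat k k" using X by auto
  have "\<forall>a. \<exists>x. 2 dvd x * x * u - l $$ (a,a)" using sq by blast
  then obtain r where r: "\<forall>a. 2 dvd r a * r a * u - l $$ (a,a)" using choice[of "\<lambda>a x. 2 dvd x * x * u - l $$ (a,a)"] by blast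
  have "\<forall>a. \<exists>e. l $$ (a,a) - r a * r a * u = 2 * e"
  proof
    fix a obtain e where "r a * r a * u - l $$ (a,a) = 2 * e" using r by (metis dvdE)
    hence "l $$ (a,a) - r a * r a * u = 2 * (- e)" by (simp add: algebra_simps)
    thus "\<exists>e. l $$ (a,a) - r a * r a * u = 2 * e" by blast
  qed
  then obtain d where d: "\<forall>a. l $$ (a,a) - r a * r a * u = 2 * d a" using choice[of "\<lambda>a e. l $$ (a,a) - r a * r a * u = 2 * e"] by blast
  have lsym: "l $$ (a,b) = l $$ (b,a)" if "a < n" "b < n" for a b
    using l that by (metis carrier_matD index_transpose_mat(1))
  define S where "S a b = (if a < b then l $$ (a,b) - r a * r b * u else if a = b then d a else 0)" for a b
  define \<phi> where "\<phi> c = v \<bullet> (J *\<^sub>v col X c)" for c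
  define A where "A = mat (2*n) n (\<lambda>(p,c). if even p then (if p div 2 = c then 1 else 0) else S (p div 2) c)"
  define Cm where "Cm = mat (2*n) k (\<lambda>(p,c). if even p then 0 else - (r (p div 2) * \<phi> c))"
  define B where "B = mat j n (\<lambda>(q,c). r c * v $ q)"
  define X' where "X' = four_block_mat A Cm B X"
  have Ac: "A \<in> carrier_mat (2*n) n" and Cc: "Cm \<in> carrier_mat (2*n) k" and Bc: "B \<in> carrier_mat j n"
    unfolding A_def Cm_def B_def by auto
  have X'c: "X' \<in> carrier_mat (2*n + j) (n + k)" unfolding X'_def using Ac X by auto
  have H: "hyp_pow n \<in> carrier_mat (2*n) (2*n)" by (rule hyp_pow_carrier)
  have Meq: "hyp_pow n \<perp>\<^sub>L J = four_block_mat (hyp_pow n) (0\<^sub>m (2*n) j) (0\<^sub>m j (2*n)) J"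
    unfolding orth_sum_def carrier_matD[OF H] carrier_matD[OF J(1)] by (rule refl)
  have Leq: "l \<perp>\<^sub>L K = four_block_mat l (0\<^sub>m n k) (0\<^sub>m k n) K"
    unfolding orth_sum_def carrier_matD[OF l(1)] carrier_matD[OF K] by (rule refl)
  have Mc: "hyp_pow n \<perp>\<^sub>L J \<in> carrier_mat (2*n + j) (2*n + j)" unfolding Meq by (rule four_block_carrier_mat[OF H J(1)])
  have Lc: "l \<perp>\<^sub>L K \<in> carrier_mat (n + k) (n + k)" unfolding Leq by (rule four_block_carrier_mat[OF l(1) K])
  define hc where "hc a = (if a < n then col A a else col Cm (a - n))" for a
  define jc where "jc a = (if a < n then col B a else col X (a - n))" for a
  have hc_c: "hc a \<in> carrier_vec (2*n)" for a unfolding hc_def carrier_vec_def using carrier_matD(1)[OF Ac] carrier_matD(1)[OF Cc] by auto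
  have jc_c: "jc a \<in> carrier_vec j" for a unfolding jc_def carrier_vec_def using carrier_matD(1)[OF Bc] carrier_matD(1)[OF X(1)] by auto
  have colX': "col X' a = hc a @\<^sub>v jc a" if "a < n + k" for a
    unfolding X'_def hc_def jc_def using col_four_block_mat[OF Ac Cc Bc X(1)] that by auto
  have hc_even: "hc a $ (2*i) = (if a < n \<and> i = a then 1 else 0)" if "a < n + k" "i < n" for a i
    unfolding hc_def A_def Cm_def using that by auto
  have hc_odd: "hc a $ Suc (2*i) = (if a < n then S i a else - (r i * \<phi> (a - n)))" if "a < n + k" "i < n" for a i
    unfolding hc_def A_def Cm_def using that by auto
  have colB: "col B a = r a \<cdot>\<^sub>v v" if "a < n" for a
    unfolding B_def using that v by (intro eq_vecI, auto)
  have jc_lt: "jc a = r a \<cdot>\<^sub>v v" if "a < n" for a unfolding jc_def using that colB by auto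
  have jc_ge: "jc a = col X (a - n)" if "\<not> a < n" for a unfolding jc_def using that by auto
  have Mv: "(hyp_pow n \<perp>\<^sub>L J) *\<^sub>v (h @\<^sub>v w) = (hyp_pow n *\<^sub>v h) @\<^sub>v (J *\<^sub>v w)"
    if "h \<in> carrier_vec (2*n)" "w \<in> carrier_vec j" for h w
    unfolding Meq using mult_mat_vec_split[OF H J(1) that] .
  have entry: "(transpose_mat X' * (hyp_pow n \<perp>\<^sub>L J) * X') $$ (a,b)
     = hc a \<bullet> (hyp_pow n *\<^sub>v hc b) + jc a \<bullet> (J *\<^sub>v jc b)" if "a < n + k" "b < n + k" for a b
  proof -
    have "(transpose_mat X' * (hyp_pow n \<perp>\<^sub>L J) * X') $$ (a,b) = col X' a \<bullet> ((hyp_pow n \<perp>\<^sub>L J) *\<^sub>v col X' b)"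
      by (rule gram_entry[OF X'c Mc X'c that])
    also have "\<dots> = (hc a @\<^sub>v jc a) \<bullet> ((hyp_pow n *\<^sub>v hc b) @\<^sub>v (J *\<^sub>v jc b))"
      using colX' that Mv hc_c jc_c by simp
    also have "\<dots> = hc a \<bullet> (hyp_pow n *\<^sub>v hc b) + jc a \<bullet> (J *\<^sub>v jc b)"
      by (rule scalar_prod_append[OF hc_c jc_c mult_mat_vec_carrier[OF H hc_c] mult_mat_vec_carrier[OF J(1) jc_c]])
    finally show ?thesis .
  qed
  have hpart: "hc a \<bullet> (hyp_pow n *\<^sub>v hc b) = (\<Sum>i<n. hc a $ (2*i) * hc b $ (2*i+1) + hc a $ (2*i+1) * hc b $ (2*i))" for a b
    by (rule hform[OF hc_c hc_c])
  have gram: "transpose_mat X' * (hyp_pow n \<perp>\<^sub>L J) * X' = l \<perp>\<^sub>L K"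
  proof (rule eq_matI)
    fix a b assume ab: "a < dim_row (l \<perp>\<^sub>L K)" "b < dim_col (l \<perp>\<^sub>L K)"
    hence ab': "a < n + k" "b < n + k" using Lc by auto
    show "(transpose_mat X' * (hyp_pow n \<perp>\<^sub>L J) * X') $$ (a,b) = (l \<perp>\<^sub>L K) $$ (a,b)"
    proof (cases "a < n")
      case an: True
      show ?thesis
      proof (cases "b < n")
        case bn: True
        have "hc a \<bullet> (hyp_pow n *\<^sub>v hc b) = (\<Sum>i<n. (if i = a then S i b else 0) + (if i = b then S i a else 0))"
          unfolding hpart by (rule sum.cong, auto simp: hc_even hc_odd ab' an bn)
        also have "\<dots> = S a b + S b a" using an bn by (simp add: sum.distrib sum.delta')
        finally have h1: "hc a \<bullet> (hyp_pow n *\<^sub>v hc b) = S a b + S b a" .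
        have j1: "jc a \<bullet> (J *\<^sub>v jc b) = r a * r b * u"
          using jc_lt[OF an] jc_lt[OF bn] bil_smult_right[OF J(1) _ v(1)] v J by simp
        have "S a b + S b a + r a * r b * u = l $$ (a,b)"
        proof -
          consider "a < b" | "a = b" | "b < a" by linarith
          thus ?thesis
          proof cases
            case 1 thus ?thesis unfolding S_def by simp
          next
            case 2
            have Saa: "S a a = d a" unfolding S_def by simp
            have "l $$ (a,a) = 2 * d a + r a * r a * u" using d by (simp add: diff_eq_eq)
            also have "2 * d a = d a + d a" by (rule mult_2)
            finally show ?thesis using 2 Saa by simp
          next
            case 3 thus ?thesis unfolding S_def using lsym[OF an bn] by (simp add: ac_simps)
          qed
        qed
        thus ?thesis unfolding entry[OF ab'] h1 j1 Leq using an bn l K by simp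
      next
        case bn: False
        have "hc a \<bullet> (hyp_pow n *\<^sub>v hc b) = (\<Sum>i<n. (if i = a then - (r i * \<phi> (b - n)) else 0))"
          unfolding hpart by (rule sum.cong, auto simp: hc_even hc_odd ab' an bn)
        also have "\<dots> = - (r a * \<phi> (b - n))" using an by (simp add: sum.delta')
        finally have h1: "hc a \<bullet> (hyp_pow n *\<^sub>v hc b) = - (r a * \<phi> (b - n))" .
        have j1: "jc a \<bullet> (J *\<^sub>v jc b) = r a * \<phi> (b - n)"
          using jc_lt[OF an] jc_ge[OF bn] v J X ab' bn unfolding \<phi>_def by simp
        show ?thesis unfolding entry[OF ab'] h1 j1 Leq using an bn l K ab' by simp
      qed
    next
      case an: False
      show ?thesis
      proof (cases "b < n")
        case bn: True
        have "hc a \<bullet> (hyp_pow n *\<^sub>v hc b) = (\<Sum>i<n. (if i = b then - (r i * \<phi> (a - n)) else 0))"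
          unfolding hpart by (rule sum.cong, auto simp: hc_even hc_odd ab' an bn)
        also have "\<dots> = - (r b * \<phi> (a - n))" using bn by (simp add: sum.delta')
        finally have h1: "hc a \<bullet> (hyp_pow n *\<^sub>v hc b) = - (r b * \<phi> (a - n))" .
        have cX: "col X (a - n) \<in> carrier_vec j" using X ab' an by auto
        have "jc a \<bullet> (J *\<^sub>v jc b) = r b * (col X (a - n) \<bullet> (J *\<^sub>v v))"
          using jc_lt[OF bn] jc_ge[OF an] bil_smult_right[OF J(1) cX v(1)] by simp
        also have "\<dots> = r b * \<phi> (a - n)" unfolding \<phi>_def using bil_sym[OF J cX v(1)] by simp
        finally have j1: "jc a \<bullet> (J *\<^sub>v jc b) = r b * \<phi> (a - n)" .
        show ?thesis unfolding entry[OF ab'] h1 j1 Leq using an bn l K ab' by simp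
      next
        case bn: False
        have "hc a \<bullet> (hyp_pow n *\<^sub>v hc b) = (\<Sum>i<n. 0)"
          unfolding hpart by (rule sum.cong, auto simp: hc_even hc_odd ab' an bn)
        hence h1: "hc a \<bullet> (hyp_pow n *\<^sub>v hc b) = 0" by simp
        have "jc a \<bullet> (J *\<^sub>v jc b) = (transpose_mat X * J * X) $$ (a - n, b - n)"
          using jc_ge[OF an] jc_ge[OF bn] gram_entry[OF X(1) J(1) X(1)] ab' an bn by simp
        hence j1: "jc a \<bullet> (J *\<^sub>v jc b) = K $$ (a - n, b - n)" using X by simp
        show ?thesis unfolding entry[OF ab'] h1 j1 Leq using an bn l K ab' by simp
      qed
    qed
  next
    show "dim_row (transpose_mat X' * (hyp_pow n \<perp>\<^sub>L J) * X') = dim_row (l \<perp>\<^sub>L K)"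
      using X'c Lc by simp
    show "dim_col (transpose_mat X' * (hyp_pow n \<perp>\<^sub>L J) * X') = dim_col (l \<perp>\<^sub>L K)"
      using X'c Lc by simp
  qed
  have dimM: "dim_row (hyp_pow n \<perp>\<^sub>L J) = 2*n + j" using carrier_matD(1)[OF Mc] .
  have dimL: "dim_row (l \<perp>\<^sub>L K) = n + k" using carrier_matD(1)[OF Lc] .
  obtain CJ where CJ: "is_submodule j CJ" "(\<lambda>u. X *\<^sub>v u) ` carrier_vec k \<inter> CJ = {0\<^sub>v j}"
     "\<forall>w\<in>carrier_vec j. \<exists>a\<in>(\<lambda>u. X *\<^sub>v u) ` carrier_vec k. \<exists>c\<in>CJ. w = a + c"
    using ds unfolding direct_summand_def by blast
  have CJc: "CJ \<subseteq> carrier_vec j" and CJ0: "0\<^sub>v j \<in> CJ"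
    and CJadd: "\<And>x y. x \<in> CJ \<Longrightarrow> y \<in> CJ \<Longrightarrow> x + y \<in> CJ"
    and CJsm: "\<And>c x. x \<in> CJ \<Longrightarrow> c \<cdot>\<^sub>v x \<in> CJ"
    using CJ(1) unfolding is_submodule_def by blast+
  define C' where "C' = {h @\<^sub>v w | h w. h \<in> carrier_vec (2*n) \<and> (\<forall>i<n. h $ (2*i) = 0) \<and> w \<in> CJ}"
  have Xmv: "X' *\<^sub>v (\<alpha> @\<^sub>v \<beta>) = (A *\<^sub>v \<alpha> + Cm *\<^sub>v \<beta>) @\<^sub>v (B *\<^sub>v \<alpha> + X *\<^sub>v \<beta>)"
    if "\<alpha> \<in> carrier_vec n" "\<beta> \<in> carrier_vec k" for \<alpha> \<beta>
    unfolding X'_def by (rule four_block_mat_mult_vec[OF Ac Cc Bc X(1) that])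
  have A_even: "(A *\<^sub>v \<alpha>) $ (2*i) = \<alpha> $ i" if "\<alpha> \<in> carrier_vec n" "i < n" for \<alpha> i
  proof -
    have "(A *\<^sub>v \<alpha>) $ (2*i) = (\<Sum>c\<in>{0..<n}. (if i = c then 1 else 0) * \<alpha> $ c)"
      using that by (simp add: A_def mult_mat_vec_def scalar_prod_def)
    also have "\<dots> = (\<Sum>c\<in>{0..<n}. if c = i then \<alpha> $ c else 0)"
      by (rule sum.cong, auto)
    also have "\<dots> = \<alpha> $ i" using that by (simp add: sum.delta')
    finally show ?thesis .
  qed
  have Cm_even: "(Cm *\<^sub>v \<beta>) $ (2*i) = 0" if "\<beta> \<in> carrier_vec k" "i < n" for \<beta> i
    using that by (simp add: Cm_def mult_mat_vec_def scalar_prod_def)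
  have phi_sum: "(\<Sum>c\<in>{0..<k}. \<phi> c * \<beta> $ c) = v \<bullet> (J *\<^sub>v (X *\<^sub>v \<beta>))" if "\<beta> \<in> carrier_vec k" for \<beta>
  proof -
    have JX: "J * X \<in> carrier_mat j k" using J(1) X(1) by simp
    have "v \<bullet> (J *\<^sub>v (X *\<^sub>v \<beta>)) = v \<bullet> ((J * X) *\<^sub>v \<beta>)"
      using assoc_mult_mat_vec[OF J(1) X(1) that] by simp
    also have "\<dots> = (\<Sum>c\<in>{0..<k}. (v \<bullet> col (J * X) c) * \<beta> $ c)"
      by (rule vec_mat_swap[OF JX v(1) that])
    also have "\<dots> = (\<Sum>c\<in>{0..<k}. \<phi> c * \<beta> $ c)"
      unfolding \<phi>_def using col_mult2[OF J(1) X(1)] by (intro sum.cong, auto)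
    finally show ?thesis by simp
  qed
  have Cm_zero: "Cm *\<^sub>v \<beta> = 0\<^sub>v (2*n)" if "\<beta> \<in> carrier_vec k" "X *\<^sub>v \<beta> = 0\<^sub>v j" for \<beta>
  proof (rule eq_vecI)
    have "v \<bullet> (J *\<^sub>v (X *\<^sub>v \<beta>)) = 0"
    proof -
      have "J *\<^sub>v (X *\<^sub>v \<beta>) = 0\<^sub>v j" unfolding that(2) using J(1)
        by (intro eq_vecI, auto simp: scalar_prod_def)
      thus ?thesis using v(1) by (simp add: scalar_prod_def)
    qed
    hence ps: "(\<Sum>c\<in>{0..<k}. \<phi> c * \<beta> $ c) = 0" using phi_sum[OF that(1)] by simp
    fix p assume "p < dim_vec (0\<^sub>v (2*n) :: 'a vec)"
    hence p: "p < 2*n" by simp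
    have "(Cm *\<^sub>v \<beta>) $ p = (\<Sum>c\<in>{0..<k}. (if even p then 0 else - (r (p div 2) * \<phi> c)) * \<beta> $ c)"
      using p that(1) by (simp add: Cm_def mult_mat_vec_def scalar_prod_def)
    also have "\<dots> = (if even p then 0 else - (r (p div 2)) * (\<Sum>c\<in>{0..<k}. \<phi> c * \<beta> $ c))"
      by (cases "even p", auto simp: sum_distrib_left ac_simps)
    also have "\<dots> = 0" using ps by simp
    finally show "(Cm *\<^sub>v \<beta>) $ p = 0\<^sub>v (2*n) $ p" using p by simp
  qed (insert Cc, auto)
  have ds': "direct_summand (2*n + j) ((\<lambda>u. X' *\<^sub>v u) ` carrier_vec (n + k))"
    unfolding direct_summand_def
  proof (intro exI[of _ C'] conjI)
    show "is_submodule (2*n + j) C'"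
      unfolding is_submodule_def
    proof (intro conjI ballI allI)
      show "C' \<subseteq> carrier_vec (2*n + j)" unfolding C'_def using CJc by auto
      show "0\<^sub>v (2*n + j) \<in> C'" unfolding C'_def append_vec_zero using CJ0 by (intro CollectI exI[of _ "0\<^sub>v (2*n)"] exI[of _ "0\<^sub>v j"], auto)
      fix x y assume x: "x \<in> C'" and y: "y \<in> C'"
      then obtain h w h' w' where hw: "x = h @\<^sub>v w" "h \<in> carrier_vec (2*n)" "\<forall>i<n. h $ (2*i) = 0" "w \<in> CJ"
        and hw': "y = h' @\<^sub>v w'" "h' \<in> carrier_vec (2*n)" "\<forall>i<n. h' $ (2*i) = 0" "w' \<in> CJ"
        unfolding C'_def by blast
      have "x + y = (h + h') @\<^sub>v (w + w')" unfolding hw(1) hw'(1)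
        by (rule append_vec_add, insert hw hw' CJc, auto)
      moreover have "\<forall>i<n. (h + h') $ (2*i) = 0" using hw hw' by auto
      moreover have "w + w' \<in> CJ" using CJadd hw hw' by blast
      moreover have "h + h' \<in> carrier_vec (2*n)" using hw hw' by simp
      ultimately show "x + y \<in> C'" unfolding C'_def by blast
    next
      fix c x assume x: "x \<in> C'"
      then obtain h w where hw: "x = h @\<^sub>v w" "h \<in> carrier_vec (2*n)" "\<forall>i<n. h $ (2*i) = 0" "w \<in> CJ"
        unfolding C'_def by blast
      have "c \<cdot>\<^sub>v x = (c \<cdot>\<^sub>v h) @\<^sub>v (c \<cdot>\<^sub>v w)" unfolding hw(1) by (rule append_vec_smult)
      moreover have "\<forall>i<n. (c \<cdot>\<^sub>v h) $ (2*i) = 0" using hw by auto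
      moreover have "c \<cdot>\<^sub>v w \<in> CJ" using hw CJsm by blast
      moreover have "c \<cdot>\<^sub>v h \<in> carrier_vec (2*n)" using hw by simp
      ultimately show "c \<cdot>\<^sub>v x \<in> C'" unfolding C'_def by blast
    qed
  next
    show "(\<lambda>u. X' *\<^sub>v u) ` carrier_vec (n + k) \<inter> C' = {0\<^sub>v (2*n + j)}"
    proof
      show "(\<lambda>u. X' *\<^sub>v u) ` carrier_vec (n + k) \<inter> C' \<subseteq> {0\<^sub>v (2*n + j)}"
      proof
        fix y assume "y \<in> (\<lambda>u. X' *\<^sub>v u) ` carrier_vec (n + k) \<inter> C'"
        then obtain \<gamma> h w where g: "\<gamma> \<in> carrier_vec (n + k)" "y = X' *\<^sub>v \<gamma>" and
          hw: "y = h @\<^sub>v w" "h \<in> carrier_vec (2*n)" "\<forall>i<n. h $ (2*i) = 0" "w \<in> CJ"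
          unfolding C'_def by blast
        define \<alpha> where "\<alpha> = vec_first \<gamma> n"
        define \<beta> where "\<beta> = vec_last \<gamma> k"
        have al: "\<alpha> \<in> carrier_vec n" and be: "\<beta> \<in> carrier_vec k" unfolding \<alpha>_def \<beta>_def by auto
        have "\<gamma> = \<alpha> @\<^sub>v \<beta>" unfolding \<alpha>_def \<beta>_def using g(1) by simp
        hence "(A *\<^sub>v \<alpha> + Cm *\<^sub>v \<beta>) @\<^sub>v (B *\<^sub>v \<alpha> + X *\<^sub>v \<beta>) = h @\<^sub>v w"
          using g hw Xmv[OF al be] by simp
        hence e1: "A *\<^sub>v \<alpha> + Cm *\<^sub>v \<beta> = h" and e2: "B *\<^sub>v \<alpha> + X *\<^sub>v \<beta> = w"
          using append_vec_eq[of "A *\<^sub>v \<alpha> + Cm *\<^sub>v \<beta>" "2*n" h] hw(2) Ac Cc al be by auto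
        have a0: "\<alpha> = 0\<^sub>v n"
        proof (rule eq_vecI)
          fix i assume "i < dim_vec (0\<^sub>v n :: 'a vec)"
          hence i: "i < n" by simp
          have "h $ (2*i) = (A *\<^sub>v \<alpha>) $ (2*i) + (Cm *\<^sub>v \<beta>) $ (2*i)"
            using e1[symmetric] i Cc be by simp
          thus "\<alpha> $ i = 0\<^sub>v n $ i" using A_even[OF al i] Cm_even[OF be i] hw(3) i by simp
        qed (insert al, auto)
        have Ba: "B *\<^sub>v \<alpha> = 0\<^sub>v j" unfolding a0 using Bc by (intro eq_vecI, auto simp: scalar_prod_def)
        have Aa: "A *\<^sub>v \<alpha> = 0\<^sub>v (2*n)" unfolding a0 using Ac by (intro eq_vecI, auto simp: scalar_prod_def)
        have "w = X *\<^sub>v \<beta>" using e2 Ba X(1) be by simp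
        hence "X *\<^sub>v \<beta> \<in> (\<lambda>u. X *\<^sub>v u) ` carrier_vec k \<inter> CJ" using hw(4) be by blast
        hence Xb: "X *\<^sub>v \<beta> = 0\<^sub>v j" using CJ(2) by blast
        have Cb: "Cm *\<^sub>v \<beta> = 0\<^sub>v (2*n)" by (rule Cm_zero[OF be Xb])
        have "y = (0\<^sub>v (2*n) + 0\<^sub>v (2*n)) @\<^sub>v (0\<^sub>v j + 0\<^sub>v j)"
          using g \<open>\<gamma> = \<alpha> @\<^sub>v \<beta>\<close> Xmv[OF al be] Aa Ba Cb Xb by simp
        also have "\<dots> = 0\<^sub>v (2*n + j)" by (simp add: append_vec_zero)
        finally show "y \<in> {0\<^sub>v (2*n + j)}" by simp
      qed
    next
      have "X' *\<^sub>v 0\<^sub>v (n + k) = 0\<^sub>v (2*n + j)" using X'c by (intro eq_vecI, auto simp: scalar_prod_def)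
      moreover have "0\<^sub>v (2*n + j) \<in> C'" unfolding C'_def append_vec_zero using CJ0 by (intro CollectI exI[of _ "0\<^sub>v (2*n)"] exI[of _ "0\<^sub>v j"], auto)
      ultimately show "{0\<^sub>v (2*n + j)} \<subseteq> (\<lambda>u. X' *\<^sub>v u) ` carrier_vec (n + k) \<inter> C'"
        by (metis (no_types, lifting) Int_iff empty_subsetI imageI insert_subset zero_carrier_vec)
    qed
  next
    show "\<forall>w\<in>carrier_vec (2*n + j). \<exists>a\<in>(\<lambda>u. X' *\<^sub>v u) ` carrier_vec (n + k). \<exists>c\<in>C'. w = a + c"
    proof
      fix w0 :: "'a vec" assume w0: "w0 \<in> carrier_vec (2*n + j)"
      define h where "h = vec_first w0 (2*n)"
      define w where "w = vec_last w0 j"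
      have hc: "h \<in> carrier_vec (2*n)" and wc: "w \<in> carrier_vec j" unfolding h_def w_def by auto
      have w0eq: "w0 = h @\<^sub>v w" unfolding h_def w_def using w0 by simp
      define \<alpha> where "\<alpha> = vec n (\<lambda>i. h $ (2*i))"
      have al: "\<alpha> \<in> carrier_vec n" unfolding \<alpha>_def by simp
      have "w - B *\<^sub>v \<alpha> \<in> carrier_vec j" using wc Bc al by simp
      then obtain a c where a: "a \<in> (\<lambda>u. X *\<^sub>v u) ` carrier_vec k" and c: "c \<in> CJ" and wa: "w - B *\<^sub>v \<alpha> = a + c"
        using CJ(3) by blast
      then obtain \<beta> where be: "\<beta> \<in> carrier_vec k" and a': "a = X *\<^sub>v \<beta>" by blast
      define hh where "hh = A *\<^sub>v \<alpha> + Cm *\<^sub>v \<beta>"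
      have hhc: "hh \<in> carrier_vec (2*n)" unfolding hh_def using Ac Cc al be by simp
      have cc: "c \<in> carrier_vec j" using c CJc by blast
      have comp: "(h - hh) @\<^sub>v c \<in> C'"
      proof -
        have "\<forall>i<n. (h - hh) $ (2*i) = 0"
        proof (intro allI impI)
          fix i assume i: "i < n"
          have "(h - hh) $ (2*i) = h $ (2*i) - ((A *\<^sub>v \<alpha>) $ (2*i) + (Cm *\<^sub>v \<beta>) $ (2*i))"
            unfolding hh_def using i hc Ac Cc al be by simp
          thus "(h - hh) $ (2*i) = 0" using A_even[OF al i] Cm_even[OF be i] i unfolding \<alpha>_def by simp
        qed
        moreover have "h - hh \<in> carrier_vec (2*n)" using hc hhc by simp
        ultimately show ?thesis unfolding C'_def using c by blast
      qed
      have img: "hh @\<^sub>v (B *\<^sub>v \<alpha> + X *\<^sub>v \<beta>) \<in> (\<lambda>u. X' *\<^sub>v u) ` carrier_vec (n + k)"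
      proof -
        have "hh @\<^sub>v (B *\<^sub>v \<alpha> + X *\<^sub>v \<beta>) = X' *\<^sub>v (\<alpha> @\<^sub>v \<beta>)" unfolding hh_def using Xmv[OF al be] by simp
        moreover have "\<alpha> @\<^sub>v \<beta> \<in> carrier_vec (n + k)" using al be by simp
        ultimately show ?thesis by blast
      qed
      have "(hh @\<^sub>v (B *\<^sub>v \<alpha> + X *\<^sub>v \<beta>)) + ((h - hh) @\<^sub>v c) = (hh + (h - hh)) @\<^sub>v ((B *\<^sub>v \<alpha> + X *\<^sub>v \<beta>) + c)"
        by (rule append_vec_add, insert hhc hc Bc X(1) al be cc, auto)
      also have "hh + (h - hh) = h" using hhc hc by (intro eq_vecI, auto)
      also have "(B *\<^sub>v \<alpha> + X *\<^sub>v \<beta>) + c = w"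
      proof (rule eq_vecI)
        fix i assume "i < dim_vec w"
        hence i: "i < j" using wc by simp
        have "(w - B *\<^sub>v \<alpha>) $ i = (a + c) $ i" using wa by simp
        hence "w $ i - (B *\<^sub>v \<alpha>) $ i = (X *\<^sub>v \<beta>) $ i + c $ i" using i wc Bc X(1) cc a' by simp
        thus "((B *\<^sub>v \<alpha> + X *\<^sub>v \<beta>) + c) $ i = w $ i" using i Bc X(1) cc by (simp add: algebra_simps)
      qed (insert wc Bc cc, auto)
      finally have "w0 = (hh @\<^sub>v (B *\<^sub>v \<alpha> + X *\<^sub>v \<beta>)) + ((h - hh) @\<^sub>v c)" using w0eq by simp
      thus "\<exists>a\<in>(\<lambda>u. X' *\<^sub>v u) ` carrier_vec (n + k). \<exists>c\<in>C'. w0 = a + c" using img comp by blast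
    qed
  qed
  show ?thesis unfolding prim_rep_def dimM dimL using X'c gram ds' by blast
qed


lemma sq_surj:
  assumes R: "nonarch_local_int_ring TYPE('a::idom)"
    and two_prime: "prime_elem (2::'a)"
  shows "\<exists>r::'a. 2 dvd r * r - \<beta>"
proof -
  obtain \<pi> :: 'a and S where pi0: "\<pi> \<noteq> 0" and fact: "\<forall>x. x \<noteq> 0 \<longrightarrow> (\<exists>u n. u dvd 1 \<and> x = u * \<pi> ^ n)"
    and S: "finite S" "\<forall>x. \<exists>s\<in>S. \<pi> dvd (x - s)"
    using R unfolding nonarch_local_int_ring_def by blast
  have two0: "(2::'a) \<noteq> 0" using two_prime by (simp add: prime_elem_def)
  obtain w n where w: "w dvd 1" "(2::'a) = w * \<pi> ^ n" using fact two0 by blast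
  have "\<not> (2::'a) dvd w" using w(1) two_prime
    by (meson dvd_trans prime_elem_not_unit)
  moreover have "(2::'a) dvd w * \<pi> ^ n" using w(2) by (metis dvd_refl)
  ultimately have "(2::'a) dvd \<pi> ^ n" using two_prime prime_elem_dvd_mult_iff by blast
  hence "(2::'a) dvd \<pi>" using two_prime prime_elem_dvd_power by blast
  hence S2: "\<forall>x. \<exists>s\<in>S. 2 dvd (x - s)" using S(2) dvd_trans by blast
  define cls where "cls x = {y::'a. 2 dvd y - x}" for x :: 'a
  have cls_eq: "cls a = cls b" if "2 dvd a - b" for a b
  proof -
    have "2 dvd y - a \<longleftrightarrow> 2 dvd y - b" for y
    proof -
      have "y - b = (y - a) + (a - b)" by simp
      moreover have "y - a = (y - b) - (a - b)" by simp
      ultimately show ?thesis using that by (metis dvd_add dvd_diff)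
    qed
    thus ?thesis unfolding cls_def by auto
  qed
  have cls_mem: "x \<in> cls x" for x unfolding cls_def by simp
  define Cl where "Cl = cls ` S"
  have finCl: "finite Cl" unfolding Cl_def using S(1) by simp
  have inCl: "cls x \<in> Cl" for x
  proof -
    obtain s where "s \<in> S" "2 dvd x - s" using S2 by blast
    thus ?thesis unfolding Cl_def using cls_eq by blast
  qed
  define g where "g c = {y. \<exists>x\<in>c. 2 dvd y - x * x}" for c :: "'a set"
  have g_cls: "g (cls a) = cls (a * a)" for a
  proof -
    have "2 dvd y - a * a" if "2 dvd x - a" "2 dvd y - x * x" for x y
    proof -
      have "y - a * a = (y - x * x) + (x - a) * (x + a)" by (simp add: algebra_simps)
      thus ?thesis using that by (metis dvd_add dvd_mult2)
    qed
    thus ?thesis unfolding g_def cls_def by (auto intro!: exI[of _ a])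
  qed
  have "g ` Cl \<subseteq> Cl" unfolding Cl_def using g_cls inCl Cl_def by auto
  moreover have "inj_on g Cl"
  proof (rule inj_onI)
    fix c d assume "c \<in> Cl" "d \<in> Cl" "g c = g d"
    then obtain a b where ab: "c = cls a" "d = cls b" "cls (a*a) = cls (b*b)"
      unfolding Cl_def using g_cls by auto
    have "a * a \<in> cls (b * b)" using ab(3) cls_mem by metis
    hence "2 dvd a * a - b * b" unfolding cls_def by simp
    moreover have "(a - b) ^ 2 = (a * a - b * b) + 2 * (b * (b - a))" by (simp add: algebra_simps power2_eq_square)
    ultimately have "2 dvd (a - b) ^ 2" by simp
    hence "2 dvd a - b" using two_prime prime_elem_dvd_power by blast
    thus "c = d" using ab cls_eq by simp
  qed
  ultimately have "g ` Cl = Cl" using finCl by (simp add: endo_inj_surj)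
  then obtain c where "c \<in> Cl" "g c = cls \<beta>" using inCl by (metis imageE)
  then obtain a where "g (cls a) = cls \<beta>" unfolding Cl_def by auto
  hence "\<beta> \<in> cls (a * a)" using g_cls cls_mem by metis
  hence "2 dvd \<beta> - a * a" unfolding cls_def by simp
  hence "2 dvd a * a - \<beta>" by (metis dvd_minus_iff minus_diff_eq)
  thus ?thesis by blast
qed

lemma sq_surj_unit:
  assumes R: "nonarch_local_int_ring TYPE('a::idom)"
    and two_prime: "prime_elem (2::'a)" and u: "(u::'a) dvd 1"
  shows "\<exists>r::'a. 2 dvd r * r * u - \<beta>"
proof -
  obtain u' where u': "1 = u * u'" using u by (metis dvdE)
  obtain r where r: "2 dvd r * r - \<beta> * u'" using sq_surj[OF R two_prime] by blast
  have "r * r * u - \<beta> = u * (r * r - \<beta> * u') + \<beta> * (u * u' - 1)" by (simp add: algebra_simps)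
  hence "r * r * u - \<beta> = u * (r * r - \<beta> * u')" using u' by simp
  thus ?thesis using r by (metis dvd_mult)
qed

lemma sum3: "(\<Sum>k\<in>{0..<3::nat}. f k) = f 0 + f 1 + (f 2 :: 'a::comm_monoid_add)"
  by (simp add: numeral_3_eq_3 numeral_2_eq_2 add.assoc)

lemma lt3: "i < (3::nat) \<Longrightarrow> i = 0 \<or> i = 1 \<or> i = 2" by auto

definition M3f :: "'a::comm_ring_1 \<Rightarrow> nat \<times> nat \<Rightarrow> 'a" where
  "M3f \<epsilon> = (\<lambda>(i,j). if i < 2 \<and> j < 2 then (if i = j then 0 else 1) else if i = 2 \<and> j = 2 then \<epsilon> else 0)"

lemma M3_eq: "hyp_plane \<perp>\<^sub>L diag_lat [\<epsilon>] = mat 3 3 (M3f \<epsilon>)"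
  by (rule eq_matI, auto simp: orth_sum_def hyp_plane_def diag_lat_def M3f_def)

lemma isom_part:
  fixes \<epsilon> z t :: "'a::comm_ring_1"
  assumes rel: "\<epsilon> * z * z = 1 - 2 * t"
  shows "isometric (hyp_plane \<perp>\<^sub>L diag_lat [\<epsilon>]) (diag_lat [1, -1, \<epsilon>])"
proof -
  define Xf where "Xf = (\<lambda>(i::nat,j::nat). if i = 0 then (if j = 0 then 1 else if j = 1 then 1 else 0)
     else if i = 1 then (if j = 0 then t else if j = 1 then t - 1 else - (\<epsilon> * z))
     else (if j = 0 then z else if j = 1 then z else (1::'a)))"
  define Yf where "Yf = (\<lambda>(i::nat,j::nat). if i = 0 then (if j = 0 then 1 - t - \<epsilon> * z * z else if j = 1 then 1 else \<epsilon> * z)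
     else if i = 1 then (if j = 0 then t + \<epsilon> * z * z else if j = 1 then - 1 else - (\<epsilon> * z))
     else (if j = 0 then - z else if j = 1 then 0 else (1::'a)))"
  have rel': "\<epsilon> * (z * z) + t * 2 = 1"
  proof -
    have "\<epsilon> * (z * z) + t * 2 = \<epsilon> * z * z + 2 * t" by (simp add: algebra_simps)
    also have "\<dots> = 1" using rel by simp
    finally show ?thesis .
  qed
  define Xm where "Xm = mat 3 3 Xf"
  define Ym where "Ym = mat 3 3 Yf"
  have XY: "Xm * Ym = 1\<^sub>m 3"
  proof (rule eq_matI)
    fix i j assume "i < dim_row (1\<^sub>m 3 :: 'a mat)" "j < dim_col (1\<^sub>m 3 :: 'a mat)"
    hence "i < 3" "j < 3" by auto
    thus "(Xm * Ym) $$ (i,j) = (1\<^sub>m 3 :: 'a mat) $$ (i,j)"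
      unfolding Xm_def Ym_def using lt3[of i] lt3[of j]
      by (auto simp: scalar_prod_def sum3 Xf_def Yf_def algebra_simps)
  qed (auto simp: Xm_def Ym_def)
  have YX: "Ym * Xm = 1\<^sub>m 3"
  proof (rule eq_matI)
    fix i j assume "i < dim_row (1\<^sub>m 3 :: 'a mat)" "j < dim_col (1\<^sub>m 3 :: 'a mat)"
    hence "i < 3" "j < 3" by auto
    thus "(Ym * Xm) $$ (i,j) = (1\<^sub>m 3 :: 'a mat) $$ (i,j)"
      unfolding Xm_def Ym_def using lt3[of i] lt3[of j]
      by (auto simp: scalar_prod_def sum3 Xf_def Yf_def algebra_simps)
  qed (auto simp: Xm_def Ym_def)
  have G: "transpose_mat Xm * mat 3 3 (M3f \<epsilon>) * Xm = diag_lat [1, -1, \<epsilon>]"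
  proof (rule eq_matI)
    fix i j assume "i < dim_row (diag_lat [1, -1, \<epsilon>])" "j < dim_col (diag_lat [1, -1, \<epsilon>])"
    hence ij: "i < 3" "j < 3" by (auto simp: diag_lat_def)
    have "(transpose_mat Xm * mat 3 3 (M3f \<epsilon>) * Xm) $$ (i,j) = col Xm i \<bullet> (mat 3 3 (M3f \<epsilon>) *\<^sub>v col Xm j)"
      by (rule gram_entry[of _ 3 3], insert ij, auto simp: Xm_def)
    also have "\<dots> = diag_lat [1, -1, \<epsilon>] $$ (i,j)"
      unfolding Xm_def using lt3[OF ij(1)] lt3[OF ij(2)]
      by (auto simp: scalar_prod_def sum3 Xf_def M3f_def diag_lat_def algebra_simps rel')
    finally show "(transpose_mat Xm * mat 3 3 (M3f \<epsilon>) * Xm) $$ (i,j) = diag_lat [1, -1, \<epsilon>] $$ (i,j)" .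
  qed (auto simp: Xm_def diag_lat_def)
  show ?thesis unfolding isometric_def M3_eq
    by (intro exI[of _ Xm] exI[of _ Ym], insert XY YX G, auto simp: Xm_def Ym_def diag_lat_def)
qed


lemma hyp_pow_1: "hyp_pow 1 = hyp_plane"
  by (rule eq_matI, auto simp: orth_sum_def hyp_plane_def)

lemma orth_zero: "L \<in> carrier_mat n n \<Longrightarrow> L \<perp>\<^sub>L 0\<^sub>m 0 0 = L"
  by (rule eq_matI, auto simp: orth_sum_def)

lemma diag_split: "diag_lat [\<alpha>] \<perp>\<^sub>L diag_lat [\<epsilon>] = diag_lat [\<alpha>, \<epsilon>]"
proof (rule eq_matI)
  fix i j assume "i < dim_row (diag_lat [\<alpha>, \<epsilon>])" "j < dim_col (diag_lat [\<alpha>, \<epsilon>])"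
  hence "i < 2" "j < 2" by (auto simp: diag_lat_def)
  hence "i = 0 \<or> i = 1" "j = 0 \<or> j = 1" by auto
  thus "(diag_lat [\<alpha>] \<perp>\<^sub>L diag_lat [\<epsilon>]) $$ (i, j) = diag_lat [\<alpha>, \<epsilon>] $$ (i, j)"
    by (auto simp: orth_sum_def diag_lat_def)
qed (auto simp: orth_sum_def diag_lat_def)

lemma zero_facts:
  fixes J :: "'a::comm_ring_1 mat"
  assumes "J \<in> carrier_mat j j"
  shows "transpose_mat (0\<^sub>m j 0) * J * 0\<^sub>m j 0 = (0\<^sub>m 0 0 :: 'a mat)"
    "direct_summand j ((\<lambda>u. (0\<^sub>m j 0 :: 'a mat) *\<^sub>v u) ` carrier_vec 0)"
proof -
  show "transpose_mat (0\<^sub>m j 0) * J * 0\<^sub>m j 0 = (0\<^sub>m 0 0 :: 'a mat)"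
    by (rule eq_matI, auto)
  have im: "(\<lambda>u. (0\<^sub>m j 0 :: 'a mat) *\<^sub>v u) ` carrier_vec 0 = {0\<^sub>v j}"
  proof -
    have z0: "(0\<^sub>m j 0 :: 'a mat) *\<^sub>v u = 0\<^sub>v j" if "u \<in> carrier_vec 0" for u
      using that by (intro eq_vecI, auto simp: scalar_prod_def)
    show ?thesis
    proof (intro equalityI subsetI)
      fix x :: "'a vec" assume "x \<in> (\<lambda>u. (0\<^sub>m j 0 :: 'a mat) *\<^sub>v u) ` carrier_vec 0"
      then obtain u where "u \<in> carrier_vec 0" "x = (0\<^sub>m j 0 :: 'a mat) *\<^sub>v u" by blast
      thus "x \<in> {0\<^sub>v j}" using z0 by simp
    next
      fix x :: "'a vec" assume "x \<in> {0\<^sub>v j}"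
      hence "x = (0\<^sub>m j 0 :: 'a mat) *\<^sub>v 0\<^sub>v 0" using z0[of "0\<^sub>v 0"] by simp
      moreover have "(0\<^sub>v 0 :: 'a vec) \<in> carrier_vec 0" by simp
      ultimately show "x \<in> (\<lambda>u. (0\<^sub>m j 0 :: 'a mat) *\<^sub>v u) ` carrier_vec 0" by blast
    qed
  qed
  show "direct_summand j ((\<lambda>u. (0\<^sub>m j 0 :: 'a mat) *\<^sub>v u) ` carrier_vec 0)"
    unfolding im direct_summand_def is_submodule_def
    by (intro exI[of _ "carrier_vec j"], auto)
qed

lemma ds_full: "direct_summand m ((\<lambda>u. (1\<^sub>m m :: 'a::comm_ring_1 mat) *\<^sub>v u) ` carrier_vec m)"
proof -
  have im: "(\<lambda>u. (1\<^sub>m m :: 'a mat) *\<^sub>v u) ` carrier_vec m = carrier_vec m"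
    by (auto simp: image_iff)
  show ?thesis unfolding im direct_summand_def is_submodule_def
    by (intro exI[of _ "{0\<^sub>v m}"], auto intro!: bexI[of _ "0\<^sub>v m"])
qed

lemma univ:
  fixes J :: "'a::comm_ring_1 mat"
  assumes J: "J \<in> carrier_mat j j" "transpose_mat J = J"
    and v: "v \<in> carrier_vec j" "v \<bullet> (J *\<^sub>v v) = u"
    and sq: "\<forall>\<beta>. \<exists>r. 2 dvd r * r * u - \<beta>"
  shows "prim_universal n (hyp_pow n \<perp>\<^sub>L J)"
  unfolding prim_universal_def is_lattice_def
proof (intro allI impI)
  fix L :: "'a mat" assume L: "(L \<in> carrier_mat n n \<and> transpose_mat L = L) \<and> nondegenerate L"
  have "prim_rep (hyp_pow n \<perp>\<^sub>L J) (L \<perp>\<^sub>L 0\<^sub>m 0 0)"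
    by (rule main_rep[OF J _ zero_facts(1)[OF J(1)] zero_facts(2)[OF J(1)] v sq], insert L, auto)
  thus "prim_rep (hyp_pow n \<perp>\<^sub>L J) L" using orth_zero L by metis
qed

theorem lemma5p2:
  assumes R: "nonarch_local_int_ring TYPE('a::idom)"
    and char: "(2::'a) \<noteq> 0"
    and two_prime: "prime_elem (2::'a)"
  shows "(\<forall>\<epsilon>::'a. \<epsilon> dvd 1 \<longrightarrow>
            isometric (hyp_plane \<perp>\<^sub>L diag_lat [\<epsilon>]) (diag_lat [1, -1, \<epsilon>])
          \<and> (\<forall>\<alpha>. prim_rep (hyp_plane \<perp>\<^sub>L diag_lat [\<epsilon>]) (diag_lat [\<alpha>, \<epsilon>]))
          \<and> prim_universal 1 (hyp_plane \<perp>\<^sub>L diag_lat [\<epsilon>]))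
       \<and> (\<forall>(J::'a mat) j K k. is_lattice j J \<and> is_lattice k K \<and> prim_rep J K
            \<and> (\<exists>u. u dvd 1 \<and> prim_rep_elem J u) \<longrightarrow>
            (\<forall>n\<ge>1. (\<forall>l. is_lattice n l \<longrightarrow> prim_rep (hyp_pow n \<perp>\<^sub>L J) (l \<perp>\<^sub>L K))
                  \<and> prim_universal n (hyp_pow n \<perp>\<^sub>L J)))"
proof (intro conjI allI impI)
  fix \<epsilon> :: 'a assume e: "\<epsilon> dvd 1"
  have sq: "\<forall>\<beta>. \<exists>r. 2 dvd r * r * \<epsilon> - \<beta>" using sq_surj_unit[OF R two_prime e] by blast
  obtain z where "2 dvd z * z * \<epsilon> - 1" using sq by blast
  then obtain s where s: "z * z * \<epsilon> - 1 = 2 * s" by (metis dvdE)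
  have rel: "\<epsilon> * z * z = 1 - 2 * (- s)" using s by (simp add: algebra_simps eq_diff_eq)
  show "isometric (hyp_plane \<perp>\<^sub>L diag_lat [\<epsilon>]) (diag_lat [1, -1, \<epsilon>])"
    by (rule isom_part[OF rel])
  define J where "J = diag_lat [\<epsilon>]"
  define v :: "'a vec" where "v = vec 1 (\<lambda>_. 1)"
  have Jc: "J \<in> carrier_mat 1 1" and Js: "transpose_mat J = J" unfolding J_def diag_lat_def
    by (auto intro!: eq_matI)
  have vc: "v \<in> carrier_vec 1" unfolding v_def by simp
  have vJ: "v \<bullet> (J *\<^sub>v v) = \<epsilon>" unfolding v_def J_def diag_lat_def by (simp add: scalar_prod_def)
  have XJ: "transpose_mat (1\<^sub>m 1) * J * 1\<^sub>m 1 = J" using Jc by simp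
  show "prim_rep (hyp_plane \<perp>\<^sub>L diag_lat [\<epsilon>]) (diag_lat [\<alpha>, \<epsilon>])" for \<alpha>
  proof -
    have "prim_rep (hyp_pow 1 \<perp>\<^sub>L J) (diag_lat [\<alpha>] \<perp>\<^sub>L J)"
      by (rule main_rep[OF Jc Js _ XJ ds_full vc vJ sq], auto simp: diag_lat_def intro!: eq_matI)
    thus ?thesis unfolding hyp_pow_1 J_def diag_split .
  qed
  show "prim_universal 1 (hyp_plane \<perp>\<^sub>L diag_lat [\<epsilon>])"
    using univ[OF Jc Js vc vJ sq, of 1] unfolding hyp_pow_1 J_def .
next
  fix J :: "'a mat" and j K k n
  assume H: "is_lattice j J \<and> is_lattice k K \<and> prim_rep J K \<and> (\<exists>u. u dvd 1 \<and> prim_rep_elem J u)"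
  then obtain u where u: "u dvd 1" "prim_rep_elem J u" by blast
  have J: "J \<in> carrier_mat j j" "transpose_mat J = J" using H unfolding is_lattice_def by auto
  have K: "K \<in> carrier_mat k k" using H unfolding is_lattice_def by auto
  have dJ: "dim_row J = j" using J by auto
  have dK: "dim_row K = k" using K by auto
  obtain X where X: "X \<in> carrier_mat j k" "transpose_mat X * J * X = K"
    "direct_summand j ((\<lambda>u. X *\<^sub>v u) ` carrier_vec k)"
    using H unfolding prim_rep_def dJ dK by blast
  obtain v where v: "v \<in> carrier_vec j" "v \<bullet> (J *\<^sub>v v) = u"
    using u(2) unfolding prim_rep_elem_def dJ by blast
  have sq: "\<forall>\<beta>. \<exists>r. 2 dvd r * r * u - \<beta>" using sq_surj_unit[OF R two_prime u(1)] by blast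
  show "prim_rep (hyp_pow n \<perp>\<^sub>L J) (l \<perp>\<^sub>L K)" if "is_lattice n l" for l
    by (rule main_rep[OF J X v sq], insert that, auto simp: is_lattice_def)
  show "prim_universal n (hyp_pow n \<perp>\<^sub>L J)" by (rule univ[OF J v sq])
qed

end
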